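(* Let $f\in H^1(\mathbb S)$ and $\overline\omega\in\widehat L_2(\mathbb S)$. For $(x,y)\in\mathbb R^2\setminus\{(x,f(x)):x\in\mathbb R\}$ let $$V^1(x,y):=-\frac1{4\pi}\int_{-\pi}^{\pi}\overline\omega(s)\frac{\tanh((y-f(s))/2)\,[1+\tan^2((x-s)/2)]}{\tan^2((x-s)/2)+\tanh^2((y-f(s))/2)}\,ds,$$ $$V^2(x,y):=\frac1{4\pi}\int_{-\pi}^{\pi}\overline\omega(s)\frac{\tan((x-s)/2)\,[1-\tanh^2((y-f(s))/2)]}{\tan^2((x-s)/2)+\tanh^2((y-f(s))/2)}\,ds,$$ set $V:=(V^1,V^2)$, $\Omega_\pm:=\{(x,y)\in\mathbb R^2:\pm(f(x)-y)<0\}$ and $V_\pm:=V|_{\Omega_\pm}$. Then there exists a constant $C=C(\|f\|_\infty)>0$ such that $$|V_\pm(x,y)|\le C\|\overline\omega\|_1e^{-|y|/2}$$ for all $(x,y)\in\Omega_\pm$ with $|y|\ge 1+2\|f\|_\infty$.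
   Context: $\mathbb S:=\mathbb R/2\pi\mathbb Z$; functions on $\mathbb S$ are $2\pi$-periodic functions on $\mathbb R$. $H^1(\mathbb S)$ is the periodic Sobolev space, $\widehat L_2(\mathbb S):=\{h\in L_2(\mathbb S):\int_{-\pi}^{\pi}h\,dx=0\}$, and $\|\overline\omega\|_1:=\int_{-\pi}^{\pi}|\overline\omega|\,dx$. *)

theory Defs
  imports "HOL-Analysis.Analysis"
begin

text \<open>Functions on the circle S = R/2piZ are 2pi-periodic functions on R.\<close>
definition periodic2pi :: "(real \<Rightarrow> real) \<Rightarrow> bool" where
  "periodic2pi h \<longleftrightarrow> (\<forall>x. h (x + 2*pi) = h x)"

definition H1_per :: "(real \<Rightarrow> real) \<Rightarrow> bool" where
  "H1_per f \<longleftrightarrow> periodic2pi f \<and>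
     (\<exists>g. periodic2pi g \<and> g \<in> borel_measurable lborel \<and>
          set_integrable lborel {-pi..pi} (\<lambda>s. (g s)\<^sup>2) \<and>
          (\<forall>x. f x = f 0 + (LBINT s=0..x. g s)))"

definition L2hat_per :: "(real \<Rightarrow> real) \<Rightarrow> bool" where
  "L2hat_per w \<longleftrightarrow> periodic2pi w \<and> w \<in> borel_measurable lborel \<and>
     set_integrable lborel {-pi..pi} (\<lambda>s. (w s)\<^sup>2) \<and>
     (LINT s:{-pi..pi}|lborel. w s) = 0"

definition L1norm_per :: "(real \<Rightarrow> real) \<Rightarrow> real" where
  "L1norm_per w = (LINT s:{-pi..pi}|lborel. \<bar>w s\<bar>)"

definition supnorm :: "(real \<Rightarrow> real) \<Rightarrow> real" where
  "supnorm f = (SUP x. \<bar>f x\<bar>)"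

definition V1 :: "(real \<Rightarrow> real) \<Rightarrow> (real \<Rightarrow> real) \<Rightarrow> real \<Rightarrow> real \<Rightarrow> real" where
  "V1 f w x y = - (1 / (4*pi)) * (LINT s:{-pi..pi}|lborel.
      w s * (tanh ((y - f s)/2) * (1 + (tan ((x - s)/2))\<^sup>2)) /
        ((tan ((x - s)/2))\<^sup>2 + (tanh ((y - f s)/2))\<^sup>2))"

definition V2 :: "(real \<Rightarrow> real) \<Rightarrow> (real \<Rightarrow> real) \<Rightarrow> real \<Rightarrow> real \<Rightarrow> real" where
  "V2 f w x y = (1 / (4*pi)) * (LINT s:{-pi..pi}|lborel.
      w s * (tan ((x - s)/2) * (1 - (tanh ((y - f s)/2))\<^sup>2)) /
        ((tan ((x - s)/2))\<^sup>2 + (tanh ((y - f s)/2))\<^sup>2))"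

end

theory Submission
  imports Defs
begin

lemma sq_int_imp_int:
  fixes g :: "real \<Rightarrow> real"
  assumes m: "g \<in> borel_measurable lborel"
    and sq: "set_integrable lborel {-pi..pi} (\<lambda>s. (g s)\<^sup>2)"
  shows "set_integrable lborel {-pi..pi} g"
proof -
  have c: "set_integrable lborel {-pi..pi} (\<lambda>s. 1::real)"
    by (rule borel_integrable_atLeastAtMost') simp
  have "set_integrable lborel {-pi..pi} (\<lambda>s. 1 + (g s)\<^sup>2)"
    using c sq by (rule set_integral_add)
  then show ?thesis
  proof (rule set_integrable_bound)
    show "set_borel_measurable lborel {-pi..pi} g"
      using m unfolding set_borel_measurable_def by measurable
    have "\<bar>g s\<bar> \<le> 1 + (g s)\<^sup>2" for s
    proof -
      have "0 \<le> (\<bar>g s\<bar> - 1)\<^sup>2" by simp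
      moreover have "(\<bar>g s\<bar> - 1)\<^sup>2 = (g s)\<^sup>2 - 2 * \<bar>g s\<bar> + 1"
        by (simp add: power2_eq_square algebra_simps)
      ultimately show ?thesis by linarith
    qed
    then show "AE x in lborel. x \<in> {-pi..pi} \<longrightarrow> norm (g x) \<le> norm (1 + (g x)\<^sup>2)"
      by auto
  qed
qed

lemma periodic_nat:
  assumes "periodic2pi f"
  shows "f (x + 2*pi*real n) = f x"
proof (induction n)
  case 0 then show ?case by simp
next
  case (Suc n)
  have "f (x + 2*pi*real (Suc n)) = f ((x + 2*pi*real n) + 2*pi)"
    by (simp add: algebra_simps)
  also have "\<dots> = f (x + 2*pi*real n)"
    using assms unfolding periodic2pi_def by blast
  finally show ?case using Suc by simp
qed

lemma periodic_int:
  assumes "periodic2pi f"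
  shows "f (x + 2*pi * of_int k) = f x"
proof (cases "k \<ge> 0")
  case True
  then obtain n where "k = int n" by (metis nonneg_eq_int)
  then show ?thesis using periodic_nat[OF assms] by simp
next
  case False
  then obtain n where k: "k = - int n" by (rule_tac n="nat (- k)" in that) simp
  have "f ((x - 2*pi*real n) + 2*pi*real n) = f (x - 2*pi*real n)"
    using periodic_nat[OF assms] by blast
  then show ?thesis using k by simp
qed

lemma H1_bounded:
  assumes "H1_per f"
  shows "\<exists>B. \<forall>x. \<bar>f x\<bar> \<le> B"
proof -
  obtain g where per: "periodic2pi f" and gm: "g \<in> borel_measurable lborel"
    and gsq: "set_integrable lborel {-pi..pi} (\<lambda>s. (g s)\<^sup>2)"
    and rep: "\<forall>x. f x = f 0 + (LBINT s=0..x. g s)"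
    using assms unfolding H1_per_def by blast
  have gi: "set_integrable lborel {-pi..pi} g" by (rule sq_int_imp_int[OF gm gsq])
  have gai: "set_integrable lborel {-pi..pi} (\<lambda>s. \<bar>g s\<bar>)" by (rule set_integrable_abs[OF gi])
  define I where "I = (LINT s:{-pi..pi}|lborel. \<bar>g s\<bar>)"
  have sub: "\<bar>LINT s:{a..b}|lborel. g s\<bar> \<le> I" if "-pi \<le> a" "b \<le> pi" for a b
  proof -
    have sab: "{a..b} \<subseteq> {-pi..pi}" using that by auto
    have giab: "set_integrable lborel {a..b} g"
      by (rule set_integrable_subset[OF gi _ sab]) simp
    have "\<bar>LINT s:{a..b}|lborel. g s\<bar> \<le> (LINT s:{a..b}|lborel. \<bar>g s\<bar>)"
      using set_integral_norm_bound[OF giab] by simp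
    also have "\<dots> \<le> I"
      unfolding I_def set_lebesgue_integral_def
    proof (rule integral_mono)
      show "integrable lborel (\<lambda>x. indicator {a..b} x *\<^sub>R \<bar>g x\<bar>)"
        using set_integrable_abs[OF giab] unfolding set_integrable_def by simp
      show "integrable lborel (\<lambda>x. indicator {-pi..pi} x *\<^sub>R \<bar>g x\<bar>)"
        using gai unfolding set_integrable_def by simp
      show "indicator {a..b} x *\<^sub>R \<bar>g x\<bar> \<le> indicator {-pi..pi} x *\<^sub>R \<bar>g x\<bar>" for x
        using sab by (auto simp: indicator_def)
    qed
    finally show ?thesis .
  qed
  have inpi: "\<bar>f x\<bar> \<le> \<bar>f 0\<bar> + I" if "-pi \<le> x" "x \<le> pi" for x
  proof -
    have "\<bar>LBINT s=0..x. g s\<bar> \<le> I"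
    proof (cases "0 \<le> x")
      case True
      then show ?thesis using interval_integral_Icc[of 0 x g] sub[of 0 x] that by (simp add: zero_ereal_def)
    next
      case False
      then show ?thesis
        using interval_integral_endpoints_reverse[of 0 x g] interval_integral_Icc[of x 0 g] sub[of x 0] that zero_ereal_def
        by simp
    qed
    then show ?thesis using rep[rule_format, of x] by linarith
  qed
  have "\<bar>f x\<bar> \<le> \<bar>f 0\<bar> + I" for x
  proof -
    define k where "k = \<lfloor>(x + pi) / (2*pi)\<rfloor>"
    define x' where "x' = x - 2*pi * of_int k"
    have "of_int k \<le> (x + pi) / (2*pi)" "(x + pi) / (2*pi) < of_int k + 1"
      unfolding k_def by linarith+
    then have "2*pi * of_int k \<le> x + pi" "x + pi < 2*pi*(of_int k + 1)"
      using pi_gt_zero by (simp_all add: field_simps)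
    then have "-pi \<le> x'" "x' \<le> pi" unfolding x'_def by (simp_all add: algebra_simps)
    moreover have "f x = f x'"
      using periodic_int[OF per, of x' k] unfolding x'_def by simp
    ultimately show ?thesis using inpi by simp
  qed
  then show ?thesis by blast
qed

lemma pw2:
  fixes a t T \<sigma> :: real
  assumes "0 < T" "T \<le> 1" "t = \<sigma> * T" "\<sigma> \<in> {-1,1}"
  shows "\<bar>a * (1 - t\<^sup>2) / (a\<^sup>2 + t\<^sup>2)\<bar> \<le> (1 - T\<^sup>2) / (2*T)"
proof -
  have t2: "t\<^sup>2 = T\<^sup>2" using assms by (auto simp: power2_eq_square)
  have nn: "0 \<le> 1 - T\<^sup>2" using assms by (simp add: power_le_one)
  have pos: "0 < a\<^sup>2 + T\<^sup>2" using assms by (simp add: add_nonneg_pos)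
  have key: "2 * T * \<bar>a\<bar> \<le> a\<^sup>2 + T\<^sup>2"
  proof -
    have "0 \<le> (\<bar>a\<bar> - T)\<^sup>2" by simp
    moreover have "(\<bar>a\<bar> - T)\<^sup>2 = a\<^sup>2 + T\<^sup>2 - 2 * T * \<bar>a\<bar>"
      by (simp add: power2_eq_square algebra_simps)
    ultimately show ?thesis by linarith
  qed
  have "\<bar>a * (1 - t\<^sup>2) / (a\<^sup>2 + t\<^sup>2)\<bar> = \<bar>a\<bar> * (1 - T\<^sup>2) / (a\<^sup>2 + T\<^sup>2)"
    using t2 nn pos by (simp add: abs_mult abs_divide)
  also have "\<dots> = (1 - T\<^sup>2) * (\<bar>a\<bar> / (a\<^sup>2 + T\<^sup>2))" by simp
  also have "\<dots> \<le> (1 - T\<^sup>2) * (1 / (2*T))"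
  proof (rule mult_left_mono[OF _ nn])
    show "\<bar>a\<bar> / (a\<^sup>2 + T\<^sup>2) \<le> 1 / (2*T)"
      using key pos assms(1) by (simp add: field_simps)
  qed
  also have "\<dots> = (1 - T\<^sup>2) / (2*T)" by simp
  finally show ?thesis .
qed

lemma pw1:
  fixes a t T \<sigma> :: real
  assumes "0 < T" "T \<le> 1" "t = \<sigma> * T" "\<sigma> \<in> {-1,1}"
  shows "\<bar>t * (1 + a\<^sup>2) / (a\<^sup>2 + t\<^sup>2) - \<sigma>\<bar> \<le> (1 - T) + (1 - T\<^sup>2) / T"
proof -
  have t2: "t\<^sup>2 = T\<^sup>2" using assms by (auto simp: power2_eq_square)
  have nn: "0 \<le> 1 - T\<^sup>2" using assms by (simp add: power_le_one)
  have pos: "0 < a\<^sup>2 + T\<^sup>2" using assms by (simp add: add_nonneg_pos)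
  have id: "t * (1 + a\<^sup>2) / (a\<^sup>2 + t\<^sup>2) - \<sigma> = (t - \<sigma>) + t * (1 - t\<^sup>2) / (a\<^sup>2 + t\<^sup>2)"
  proof -
    have "a\<^sup>2 + T\<^sup>2 \<noteq> 0" using pos by (metis order_less_irrefl)
    then show ?thesis unfolding t2 by (simp add: field_simps)
  qed
  have a1: "\<bar>t - \<sigma>\<bar> = 1 - T" using assms by auto
  have at: "\<bar>t\<bar> = T" using assms by auto
  have "\<bar>t * (1 - t\<^sup>2) / (a\<^sup>2 + t\<^sup>2)\<bar> = T * (1 - T\<^sup>2) / (a\<^sup>2 + T\<^sup>2)"
    using t2 nn pos at by (simp add: abs_mult abs_divide)
  also have "\<dots> \<le> T * (1 - T\<^sup>2) / T\<^sup>2"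
    using assms(1) nn pos by (intro divide_left_mono) auto
  also have "\<dots> = (1 - T\<^sup>2) / T" using assms(1) by (simp add: power2_eq_square)
  finally have "\<bar>t * (1 - t\<^sup>2) / (a\<^sup>2 + t\<^sup>2)\<bar> \<le> (1 - T\<^sup>2) / T" .
  then show ?thesis unfolding id using a1 abs_triangle_ineq[of "t - \<sigma>"] by linarith
qed

lemma Ebounds:
  fixes E T :: real
  assumes "0 < E" "E \<le> 1/2" "T = (1 - E) / (1 + E)"
  shows "0 < T" "T \<le> 1" "(1 - T\<^sup>2) / (2*T) \<le> 4 * E" "(1 - T) + (1 - T\<^sup>2) / T \<le> 10 * E"
proof -
  show "0 < T" using assms by simp
  show "T \<le> 1" using assms by (simp add: divide_le_eq)
  have ne: "1 + E \<noteq> 0" using assms by auto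
  have h2: "T * (1 + E) = 1 - E" unfolding assms(3) using ne by simp
  have h1': "(1 - T\<^sup>2) * (1+E)\<^sup>2 = 4*E"
  proof -
    have "(1 - T\<^sup>2) * (1+E)\<^sup>2 = (1+E)\<^sup>2 - (T * (1 + E))\<^sup>2"
      by (simp add: power2_eq_square algebra_simps)
    also have "\<dots> = 4 * E" unfolding h2 by (simp add: power2_eq_square algebra_simps)
    finally show ?thesis .
  qed
  have h1: "1 - T\<^sup>2 = 4*E/(1+E)\<^sup>2" using h1' ne by (simp add: eq_divide_eq)
  have "4 * E \<le> 8 * E * ((1 - E) * (1 + E))"
  proof -
    have "E * E \<le> (1/2) * (1/2)" using assms by (intro mult_mono) auto
    then have "E * E \<le> 1/4" by simp
    then have "1 \<le> 2 * ((1 - E) * (1 + E))" by (simp add: algebra_simps)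
    then have "4 * E * 1 \<le> 4 * E * (2 * ((1 - E) * (1 + E)))"
      using assms by (intro mult_left_mono) auto
    then show ?thesis by simp
  qed
  also have "\<dots> = 8 * E * ((T * (1 + E)) * (1 + E))" using h2 by simp
  also have "\<dots> = 8 * E * T * (1 + E)\<^sup>2" by (simp add: power2_eq_square algebra_simps)
  finally have "4 * E / (1 + E)\<^sup>2 \<le> 8 * E * T" using ne by (simp add: divide_simps)
  then have "1 - T\<^sup>2 \<le> 8 * E * T" using h1 by simp
  then have b: "(1 - T\<^sup>2) / T \<le> 8 * E" using \<open>0 < T\<close> by (simp add: divide_simps)
  then show "(1 - T\<^sup>2) / (2*T) \<le> 4 * E" by simp
  have "1 - T = 2 * E / (1 + E)" using assms by (simp add: field_simps)
  also have "\<dots> \<le> 2 * E" using assms by (simp add: divide_simps)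
  finally show "(1 - T) + (1 - T\<^sup>2) / T \<le> 10 * E" using b by linarith
qed

lemma tanh_form:
  fixes v :: real
  shows "tanh (v/2) = (if v \<ge> 0 then 1 else -1) * ((1 - exp(-\<bar>v\<bar>)) / (1 + exp(-\<bar>v\<bar>)))"
proof (cases "v \<ge> 0")
  case True
  then show ?thesis using tanh_real_altdef[of "v/2"] by simp
next
  case False
  have "tanh (v/2) = - tanh ((-v)/2)" by simp
  also have "\<dots> = - ((1 - exp(-(-v))) / (1 + exp(-(-v))))"
    using tanh_real_altdef[of "(-v)/2"] by simp
  finally show ?thesis using False by (simp add: minus_divide_left)
qed

lemma lint_abs_nonneg: "0 \<le> (LINT s:S|lborel. \<bar>w s\<bar>::real)"
  unfolding set_lebesgue_integral_def by (rule Bochner_Integration.integral_nonneg) (simp add: indicator_def)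

lemma int_bound:
  fixes h w :: "real \<Rightarrow> real"
  assumes wi: "set_integrable lborel S w" and b: "\<forall>s\<in>S. \<bar>h s\<bar> \<le> c * \<bar>w s\<bar>" and c: "0 \<le> c"
  shows "\<bar>LINT s:S|lborel. h s\<bar> \<le> c * (LINT s:S|lborel. \<bar>w s\<bar>)"
proof (cases "set_integrable lborel S h")
  case True
  have "\<bar>LINT s:S|lborel. h s\<bar> \<le> (LINT s:S|lborel. \<bar>h s\<bar>)"
    using set_integral_norm_bound[OF True] by simp
  also have "\<dots> \<le> (LINT s:S|lborel. c * \<bar>w s\<bar>)"
    using b by (intro set_integral_mono set_integrable_abs True set_integrable_mult_right wi) auto
  also have "\<dots> = c * (LINT s:S|lborel. \<bar>w s\<bar>)" by simp
  finally show ?thesis .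
next
  case False
  then have "(LINT s:S|lborel. h s) = 0"
    unfolding set_lebesgue_integral_def set_integrable_def by (rule not_integrable_integral_eq)
  then show ?thesis using c lint_abs_nonneg[of S w] by simp
qed

lemma int_bound0:
  fixes h w :: "real \<Rightarrow> real"
  assumes wi: "set_integrable lborel S w" and w0: "(LINT s:S|lborel. w s) = 0"
    and b: "\<forall>s\<in>S. \<bar>h s - \<sigma> * w s\<bar> \<le> c * \<bar>w s\<bar>" and c: "0 \<le> c"
  shows "\<bar>LINT s:S|lborel. h s\<bar> \<le> c * (LINT s:S|lborel. \<bar>w s\<bar>)"
proof (cases "set_integrable lborel S h")
  case True
  have swi: "set_integrable lborel S (\<lambda>s. \<sigma> * w s)" using wi by auto
  have "(LINT s:S|lborel. h s - \<sigma> * w s) = (LINT s:S|lborel. h s) - (LINT s:S|lborel. \<sigma> * w s)"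
    by (rule set_integral_diff(2)[OF True swi])
  also have "\<dots> = (LINT s:S|lborel. h s)" using w0 by simp
  finally have eq: "(LINT s:S|lborel. h s) = (LINT s:S|lborel. h s - \<sigma> * w s)" by simp
  show ?thesis unfolding eq by (rule int_bound[OF wi b c])
next
  case False
  then have "(LINT s:S|lborel. h s) = 0"
    unfolding set_lebesgue_integral_def set_integrable_def by (rule not_integrable_integral_eq)
  then show ?thesis using c lint_abs_nonneg[of S w] by simp
qed

lemma pointwise:
  fixes y fs x s :: real
  assumes y1: "\<bar>y\<bar> \<ge> 1 + 2 * M" and fsM: "\<bar>fs\<bar> \<le> M"
  defines "t \<equiv> tanh ((y - fs)/2)" and "a \<equiv> tan ((x - s)/2)"
  shows "\<bar>t * (1 + a\<^sup>2) / (a\<^sup>2 + t\<^sup>2) - (if y \<ge> 0 then 1 else -1)\<bar> \<le> 10 * exp (- \<bar>y\<bar> / 2)"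
    and "\<bar>a * (1 - t\<^sup>2) / (a\<^sup>2 + t\<^sup>2)\<bar> \<le> 4 * exp (- \<bar>y\<bar> / 2)"
proof -
  define v where "v = y - fs"
  define E where "E = exp (- \<bar>v\<bar>)"
  define T where "T = (1 - E) / (1 + E)"
  define sg :: real where "sg = (if y \<ge> 0 then 1 else -1)"
  have M0: "0 \<le> M" using fsM by linarith
  have v1: "\<bar>v\<bar> \<ge> 1" and v2: "\<bar>v\<bar> \<ge> \<bar>y\<bar> / 2" using y1 fsM M0 unfolding v_def by linarith+
  have sgv: "(v \<ge> 0) = (y \<ge> 0)" using y1 fsM M0 unfolding v_def by linarith
  have tT: "t = sg * T" unfolding t_def T_def E_def sg_def
    using tanh_form[of v] sgv by (simp add: v_def)
  have E0: "0 < E" unfolding E_def by simp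
  have "E \<le> exp (-1)" unfolding E_def using v1 by simp
  also have "exp (-1) \<le> (1/2::real)"
  proof -
    have "2 \<le> exp (1::real)" using exp_ge_add_one_self[of 1] by simp
    then show ?thesis by (simp add: exp_minus divide_simps)
  qed
  finally have Eh: "E \<le> 1/2" .
  have EK: "E \<le> exp (- \<bar>y\<bar> / 2)" unfolding E_def using v2 by simp
  note eb = Ebounds[OF E0 Eh T_def]
  have sg: "sg \<in> {-1, 1}" unfolding sg_def by simp
  have "\<bar>t * (1 + a\<^sup>2) / (a\<^sup>2 + t\<^sup>2) - sg\<bar> \<le> (1 - T) + (1 - T\<^sup>2) / T"
    by (rule pw1[OF eb(1) eb(2) tT sg])
  then show "\<bar>t * (1 + a\<^sup>2) / (a\<^sup>2 + t\<^sup>2) - (if y \<ge> 0 then 1 else -1)\<bar> \<le> 10 * exp (- \<bar>y\<bar> / 2)"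
    using eb(4) EK unfolding sg_def by linarith
  have "\<bar>a * (1 - t\<^sup>2) / (a\<^sup>2 + t\<^sup>2)\<bar> \<le> (1 - T\<^sup>2) / (2*T)"
    by (rule pw2[OF eb(1) eb(2) tT sg])
  then show "\<bar>a * (1 - t\<^sup>2) / (a\<^sup>2 + t\<^sup>2)\<bar> \<le> 4 * exp (- \<bar>y\<bar> / 2)"
    using eb(3) EK by linarith
qed

theorem lemma2p1:
  shows "\<forall>M. \<exists>C>0. \<forall>f w. H1_per f \<longrightarrow> L2hat_per w \<longrightarrow> supnorm f = M \<longrightarrow>
     (\<forall>\<sigma>\<in>{-1, 1::real}. \<forall>x y. \<sigma> * (f x - y) < 0 \<longrightarrow> \<bar>y\<bar> \<ge> 1 + 2 * supnorm f \<longrightarrow>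
        sqrt ((V1 f w x y)\<^sup>2 + (V2 f w x y)\<^sup>2) \<le> C * L1norm_per w * exp (- \<bar>y\<bar> / 2))"
proof (intro allI exI[of _ "2::real"] conjI impI ballI)
  fix M f w x y and \<sigma> :: real
  assume Hf: "H1_per f" and Lw: "L2hat_per w" and y1: "\<bar>y\<bar> \<ge> 1 + 2 * supnorm f"
  obtain B where B: "\<forall>x. \<bar>f x\<bar> \<le> B" using H1_bounded[OF Hf] by blast
  have bdd: "bdd_above (range (\<lambda>x. \<bar>f x\<bar>))" using B by (auto intro: bdd_aboveI)
  have fM: "\<bar>f s\<bar> \<le> supnorm f" for s
    unfolding supnorm_def by (rule cSUP_upper[OF _ bdd]) simp
  have wm: "w \<in> borel_measurable lborel" and wsq: "set_integrable lborel {-pi..pi} (\<lambda>s. (w s)\<^sup>2)"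
    and w0: "(LINT s:{-pi..pi}|lborel. w s) = 0"
    using Lw unfolding L2hat_per_def by auto
  have wi: "set_integrable lborel {-pi..pi} w" by (rule sq_int_imp_int[OF wm wsq])
  define K where "K = exp (- \<bar>y\<bar> / 2)"
  define L where "L = L1norm_per w"
  have K0: "0 < K" unfolding K_def by simp
  have L0: "0 \<le> L" unfolding L_def L1norm_per_def by (rule lint_abs_nonneg)
  define sg :: real where "sg = (if y \<ge> 0 then 1 else -1)"
  have b1: "\<forall>s\<in>{-pi..pi}. \<bar>w s * (tanh ((y - f s)/2) * (1 + (tan ((x - s)/2))\<^sup>2)) /
        ((tan ((x - s)/2))\<^sup>2 + (tanh ((y - f s)/2))\<^sup>2) - sg * w s\<bar> \<le> (10 * K) * \<bar>w s\<bar>"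
  proof
    fix s
    note p = pointwise(1)[OF y1 fM[of s], of x s]
    have "\<bar>w s * (tanh ((y - f s)/2) * (1 + (tan ((x - s)/2))\<^sup>2)) /
        ((tan ((x - s)/2))\<^sup>2 + (tanh ((y - f s)/2))\<^sup>2) - sg * w s\<bar>
      = \<bar>w s\<bar> * \<bar>tanh ((y - f s)/2) * (1 + (tan ((x - s)/2))\<^sup>2) /
        ((tan ((x - s)/2))\<^sup>2 + (tanh ((y - f s)/2))\<^sup>2) - sg\<bar>"
      by (simp add: abs_mult[symmetric] algebra_simps)
    also have "\<dots> \<le> \<bar>w s\<bar> * (10 * K)"
      using p unfolding K_def sg_def by (intro mult_left_mono) auto
    finally show "\<bar>w s * (tanh ((y - f s)/2) * (1 + (tan ((x - s)/2))\<^sup>2)) /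
        ((tan ((x - s)/2))\<^sup>2 + (tanh ((y - f s)/2))\<^sup>2) - sg * w s\<bar> \<le> (10 * K) * \<bar>w s\<bar>"
      by (simp add: mult.commute)
  qed
  have b2: "\<forall>s\<in>{-pi..pi}. \<bar>w s * (tan ((x - s)/2) * (1 - (tanh ((y - f s)/2))\<^sup>2)) /
        ((tan ((x - s)/2))\<^sup>2 + (tanh ((y - f s)/2))\<^sup>2)\<bar> \<le> (4 * K) * \<bar>w s\<bar>"
  proof
    fix s
    note p = pointwise(2)[OF y1 fM[of s], of x s]
    have "\<bar>w s * (tan ((x - s)/2) * (1 - (tanh ((y - f s)/2))\<^sup>2)) /
        ((tan ((x - s)/2))\<^sup>2 + (tanh ((y - f s)/2))\<^sup>2)\<bar>
      = \<bar>w s\<bar> * \<bar>tan ((x - s)/2) * (1 - (tanh ((y - f s)/2))\<^sup>2) /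
        ((tan ((x - s)/2))\<^sup>2 + (tanh ((y - f s)/2))\<^sup>2)\<bar>"
      by (simp add: abs_mult[symmetric])
    also have "\<dots> \<le> \<bar>w s\<bar> * (4 * K)"
      using p unfolding K_def by (intro mult_left_mono) auto
    finally show "\<bar>w s * (tan ((x - s)/2) * (1 - (tanh ((y - f s)/2))\<^sup>2)) /
        ((tan ((x - s)/2))\<^sup>2 + (tanh ((y - f s)/2))\<^sup>2)\<bar> \<le> (4 * K) * \<bar>w s\<bar>"
      by (simp add: mult.commute)
  qed
  have I1: "\<bar>LINT s:{-pi..pi}|lborel. w s * (tanh ((y - f s)/2) * (1 + (tan ((x - s)/2))\<^sup>2)) /
        ((tan ((x - s)/2))\<^sup>2 + (tanh ((y - f s)/2))\<^sup>2)\<bar> \<le> (10 * K) * L"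
    unfolding L_def L1norm_per_def using K0 by (intro int_bound0[OF wi w0 b1]) simp
  have I2: "\<bar>LINT s:{-pi..pi}|lborel. w s * (tan ((x - s)/2) * (1 - (tanh ((y - f s)/2))\<^sup>2)) /
        ((tan ((x - s)/2))\<^sup>2 + (tanh ((y - f s)/2))\<^sup>2)\<bar> \<le> (4 * K) * L"
    unfolding L_def L1norm_per_def using K0 by (intro int_bound[OF wi b2]) simp
  have pi4: "0 < 4 * pi" by simp
  have "\<bar>V1 f w x y\<bar> \<le> (10 * K) * L / (4 * pi)"
    unfolding V1_def using I1 pi4 by (simp add: abs_mult divide_simps)
  moreover have "\<bar>V2 f w x y\<bar> \<le> (4 * K) * L / (4 * pi)"
    unfolding V2_def using I2 pi4 by (simp add: abs_mult divide_simps)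
  ultimately have "sqrt ((V1 f w x y)\<^sup>2 + (V2 f w x y)\<^sup>2) \<le> 14 * (K * L) / (4 * pi)"
    using sqrt_sum_squares_le_sum_abs[of "V1 f w x y" "V2 f w x y"] by (simp add: add_divide_distrib[symmetric])
  also have "\<dots> \<le> 2 * (K * L)"
  proof -
    have "L * 3 \<le> L * pi" using pi_gt3 L0 by (intro mult_left_mono) auto
    then have "7 * L \<le> 4 * (L * pi)" using L0 by linarith
    then show ?thesis using K0 L0 by (simp add: divide_simps)
  qed
  finally show "sqrt ((V1 f w x y)\<^sup>2 + (V2 f w x y)\<^sup>2) \<le> 2 * L1norm_per w * exp (- \<bar>y\<bar> / 2)"
    unfolding K_def L_def by (simp add: mult_ac)
qed simp

end
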